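(* Let $m\ge n\ge1$ and let $G=(g_1,\dots,g_m):\mathbb{B}^n\to\mathbb{B}^m$ be a proper holomorphic map with $G(0)=0$. Define $H_G=\big(g_1,\dots,g_{m-1},\frac{P_m}{Q},\frac{P_{m+1}}{Q}\big)$ where $P_m=\frac12\sum_{i=1}^{m-1}g_i^2-g_m^2+g_m$, $P_{m+1}=\sqrt{-1}\big(\frac12\sum_{i=1}^{m-1}g_i^2+g_m^2-g_m\big)$, $Q=\sqrt2(1-g_m)$, and $W_G=\big(g_1,\dots,g_m,1-\sqrt{1-\sum_{j=1}^mg_j^2}\big)$ (branch with $\sqrt1=1$). Then for $\Phi\in\{H_G,W_G\}$ one has $1-\Phi\overline{\Phi}^t+\frac14|\Phi\Phi^t|^2=1-\sum_{i=1}^m|g_i|^2$ on $\mathbb{B}^n$, and both $H_G$ and $W_G$ are proper holomorphic maps from $\mathbb{B}^n$ to $D^{IV}_{m+1}$.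
   Context: $\mathbb{B}^n=\{z\in\mathbb{C}^n:|z|^2<1\}$; $D^{IV}_k=\{Z\in\mathbb{C}^k: Z\overline{Z}^t<2,\ 1-Z\overline{Z}^t+\tfrac14|ZZ^t|^2>0\}$ (row vectors). Proper means preimages of compact sets are compact. *)

theory Defs
  imports "HOL-Analysis.Analysis"
begin

text \<open>Points of C^k are vectors complex^'k (index type of cardinality k).
  The norm is the Euclidean (Hermitian) norm, so ball 0 1 is the unit ball.\<close>

definition unit_ball :: "(complex ^ 'k) set" where
  "unit_ball = {z. (\<Sum>i\<in>UNIV. (cmod (z $ i))\<^sup>2) < 1}"

text \<open>Z conj(Z)^t and Z Z^t for a row vector Z.\<close>
definition hnorm2 :: "complex ^ 'k \<Rightarrow> real" where
  "hnorm2 Z = (\<Sum>i\<in>UNIV. (cmod (Z $ i))\<^sup>2)"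

definition bilin :: "complex ^ 'k \<Rightarrow> complex" where
  "bilin Z = (\<Sum>i\<in>UNIV. (Z $ i)\<^sup>2)"

definition DIV :: "(complex ^ 'k) set" where
  "DIV = {Z. hnorm2 Z < 2 \<and> 1 - hnorm2 Z + (1/4) * (cmod (bilin Z))\<^sup>2 > 0}"

definition holo_on :: "(complex ^ 'n \<Rightarrow> complex ^ 'm) \<Rightarrow> (complex ^ 'n) set \<Rightarrow> bool" where
  "holo_on f S \<longleftrightarrow> (\<forall>z\<in>S. \<exists>L. (f has_derivative L) (at z) \<and>
                        (\<forall>(c::complex) w. L (c *s w) = c *s L w))"

definition proper_map :: "('a::topological_space \<Rightarrow> 'b::topological_space) \<Rightarrow> 'a set \<Rightarrow> 'b set \<Rightarrow> bool" where
  "proper_map f S T \<longleftrightarrow> f ` S \<subseteq> T \<and> (\<forall>K. K \<subseteq> T \<and> compact K \<longrightarrow> compact (S \<inter> f -` K))"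

definition holo_proper :: "(complex ^ 'n \<Rightarrow> complex ^ 'm) \<Rightarrow> (complex ^ 'n) set \<Rightarrow> (complex ^ 'm) set \<Rightarrow> bool" where
  "holo_proper f S T \<longleftrightarrow> holo_on f S \<and> proper_map f S T"

text \<open>The components of G are indexed by 'm; the distinguished
  index l plays the role of the last coordinate g_m. The target C^(m+1) is indexed by
  'm + unit, with the new coordinate at Inr ().\<close>
definition H_map :: "(complex ^ 'n \<Rightarrow> complex ^ 'm) \<Rightarrow> 'm \<Rightarrow> complex ^ 'n \<Rightarrow> complex ^ ('m + unit)" where
  "H_map G l z = (let g = G z;
                      s = (\<Sum>i\<in>UNIV - {l}. (g $ i)\<^sup>2);
                      Pm = s / 2 - (g $ l)\<^sup>2 + g $ l;
                      Pm1 = \<i> * (s / 2 + (g $ l)\<^sup>2 - g $ l);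
                      Q = complex_of_real (sqrt 2) * (1 - g $ l)
                  in (\<chi> j. case j of Inl i \<Rightarrow> (if i = l then Pm / Q else g $ i)
                                   | Inr _ \<Rightarrow> Pm1 / Q))"

definition W_map :: "(complex ^ 'n \<Rightarrow> complex ^ 'm) \<Rightarrow> complex ^ 'n \<Rightarrow> complex ^ ('m + unit)" where
  "W_map G z = (\<chi> j. case j of Inl i \<Rightarrow> G z $ i
                     | Inr _ \<Rightarrow> 1 - csqrt (1 - (\<Sum>i\<in>UNIV. (G z $ i)\<^sup>2)))"

end

theory Submission
  imports Defs
begin

lemma has_derivative_vec_lambda':
  fixes f :: "'a::real_normed_vector \<Rightarrow> 'b::real_normed_vector ^ 'n"
  assumes d: "\<And>i. ((\<lambda>x. f x $ i) has_derivative f' i) (at z)"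
  shows "(f has_derivative (\<lambda>h. \<chi> i. f' i h)) (at z)"
  unfolding has_derivative_at_within
proof
  have bl: "\<And>i. bounded_linear (f' i)" using d by (simp add: has_derivative_at_within)
  have "\<forall>i. \<exists>K. \<forall>x. norm (f' i x) \<le> norm x * K"
    using bl bounded_linear.bounded by blast
  then obtain K where K: "\<And>i x. norm (f' i x) \<le> norm x * K i"
    by metis
  show "bounded_linear (\<lambda>h. \<chi> i. f' i h)"
  proof (rule bounded_linear_intro[where K="sum K UNIV"])
    fix x y show "(\<chi> i. f' i (x + y)) = (\<chi> i. f' i x) + (\<chi> i. f' i y)"
      using bl by (simp add: vec_eq_iff linear_simps)
  next
    fix r x show "(\<chi> i. f' i (r *\<^sub>R x)) = r *\<^sub>R (\<chi> i. f' i x)"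
      using bl by (simp add: vec_eq_iff linear_simps)
  next
      fix x
      have "norm (\<chi> i. f' i x) \<le> (\<Sum>i\<in>UNIV. norm ((\<chi> i. f' i x) $ i))"
        by (simp add: norm_vec_def L2_set_le_sum)
      also have "\<dots> \<le> (\<Sum>i\<in>UNIV. norm x * K i)" using K by (auto intro: sum_mono)
      finally show "norm (\<chi> i. f' i x) \<le> norm x * sum K UNIV" by (simp add: sum_distrib_left)
  qed
  show "((\<lambda>y. (f y - f z - (\<chi> i. f' i (y - z))) /\<^sub>R norm (y - z)) \<longlongrightarrow> 0) (at z)"
    apply (rule vec_tendstoI)
    using d by (simp add: has_derivative_at_within)
qed

definition hol :: "(complex^'n \<Rightarrow> complex) \<Rightarrow> complex^'n \<Rightarrow> bool" where
  "hol f z \<longleftrightarrow> (\<exists>L. (f has_derivative L) (at z) \<and> (\<forall>c w. L (c *s w) = c * L w))"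

lemma hol_const: "hol (\<lambda>_. c) z"
  unfolding hol_def by (rule exI[of _ "\<lambda>_. 0"]) auto

lemma hol_add: "hol f z \<Longrightarrow> hol g z \<Longrightarrow> hol (\<lambda>x. f x + g x) z"
proof -
  assume "hol f z" "hol g z"
  then obtain L M where "(f has_derivative L) (at z)" "\<forall>c w. L (c *s w) = c * L w"
    "(g has_derivative M) (at z)" "\<forall>c w. M (c *s w) = c * M w" unfolding hol_def by blast
  then show ?thesis unfolding hol_def
    by (intro exI[of _ "\<lambda>h. L h + M h"] conjI has_derivative_add) (auto simp: algebra_simps)
qed

lemma hol_diff: "hol f z \<Longrightarrow> hol g z \<Longrightarrow> hol (\<lambda>x. f x - g x) z"
proof -
  assume "hol f z" "hol g z"
  then obtain L M where "(f has_derivative L) (at z)" "\<forall>c w. L (c *s w) = c * L w"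
    "(g has_derivative M) (at z)" "\<forall>c w. M (c *s w) = c * M w" unfolding hol_def by blast
  then show ?thesis unfolding hol_def
    by (intro exI[of _ "\<lambda>h. L h - M h"] conjI has_derivative_diff) (auto simp: algebra_simps)
qed

lemma hol_mult: "hol f z \<Longrightarrow> hol g z \<Longrightarrow> hol (\<lambda>x. f x * g x) z"
proof -
  assume "hol f z" "hol g z"
  then obtain L M where "(f has_derivative L) (at z)" "\<forall>c w. L (c *s w) = c * L w"
    "(g has_derivative M) (at z)" "\<forall>c w. M (c *s w) = c * M w" unfolding hol_def by blast
  then show ?thesis unfolding hol_def
    by (intro exI[of _ "\<lambda>h. f z * M h + L h * g z"] conjI has_derivative_mult) (auto simp: algebra_simps)
qed

lemma hol_compose:
  assumes "hol f z" "(\<phi> has_field_derivative d) (at (f z))"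
  shows "hol (\<lambda>x. \<phi> (f x)) z"
proof -
  obtain L where L: "(f has_derivative L) (at z)" "\<forall>c w. L (c *s w) = c * L w"
    using assms(1) unfolding hol_def by blast
  have "(\<phi> has_derivative (\<lambda>h. d * h)) (at (f z))"
    using assms(2) by (simp add: has_field_derivative_def)
  from has_derivative_compose[OF L(1) this] show ?thesis
    unfolding hol_def using L(2) by (auto intro!: exI[of _ "\<lambda>h. d * L h"] simp: algebra_simps)
qed

lemma hol_inverse: "hol f z \<Longrightarrow> f z \<noteq> 0 \<Longrightarrow> hol (\<lambda>x. inverse (f x)) z"
  by (rule hol_compose[where \<phi>=inverse]) (auto intro: DERIV_inverse)

lemma hol_divide: "hol f z \<Longrightarrow> hol g z \<Longrightarrow> g z \<noteq> 0 \<Longrightarrow> hol (\<lambda>x. f x / g x) z"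
  unfolding divide_inverse by (intro hol_mult hol_inverse)

lemma hol_power2: "hol f z \<Longrightarrow> hol (\<lambda>x. (f x)\<^sup>2) z"
  unfolding power2_eq_square by (rule hol_mult)

lemma hol_sum: "(\<And>i. i \<in> A \<Longrightarrow> hol (f i) z) \<Longrightarrow> hol (\<lambda>x. \<Sum>i\<in>A. f i x) z"
proof (induction A rule: infinite_finite_induct)
  case (infinite A) then show ?case by (simp add: hol_const)
next
  case empty then show ?case by (simp add: hol_const)
next
  case (insert a A) then show ?case by (simp add: hol_add)
qed

lemma hol_component:
  assumes "holo_on G S" "z \<in> S"
  shows "hol (\<lambda>x. G x $ i) z"
proof -
  obtain L where L: "(G has_derivative L) (at z)" "\<forall>(c::complex) w. L (c *s w) = c *s L w"
    using assms unfolding holo_on_def by blast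
  have "((\<lambda>x. G x $ i) has_derivative (\<lambda>h. L h $ i)) (at z)"
    using bounded_linear.has_derivative[OF bounded_linear_vec_nth L(1)] .
  then show ?thesis unfolding hol_def using L(2) by auto
qed


lemma sum_plus_unit: "(\<Sum>j\<in>(UNIV::('m::finite + unit) set). f j) = (\<Sum>i\<in>UNIV. f (Inl i)) + f (Inr ())"
proof -
  have "(\<Sum>j\<in>(UNIV::('m + unit) set). f j) = (\<Sum>j\<in>(UNIV::'m set) <+> (UNIV::unit set). f j)" by simp
  also have "\<dots> = (\<Sum>i\<in>UNIV. f (Inl i)) + (\<Sum>u\<in>(UNIV::unit set). f (Inr u))"
    by (subst sum.Plus) auto
  finally show ?thesis by (simp add: UNIV_unit)
qed

lemma sum_split_l: "(\<Sum>i\<in>(UNIV::'m::finite set). f i) = f l + (\<Sum>i\<in>UNIV-{l}. f i)"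
  by (simp add: sum.remove)

lemma H_parts:
  fixes G :: "complex ^ 'n \<Rightarrow> complex ^ 'm" and z l
  defines "g \<equiv> G z"
  defines "s \<equiv> (\<Sum>i\<in>UNIV - {l}. (g $ i)\<^sup>2)"
  defines "Pm \<equiv> s / 2 - (g $ l)\<^sup>2 + g $ l"
  defines "Pm1 \<equiv> \<i> * (s / 2 + (g $ l)\<^sup>2 - g $ l)"
  defines "Q \<equiv> complex_of_real (sqrt 2) * (1 - g $ l)"
  shows "hnorm2 (H_map G l z) = (\<Sum>i\<in>UNIV-{l}. (cmod (g$i))\<^sup>2) + (cmod (Pm/Q))\<^sup>2 + (cmod (Pm1/Q))\<^sup>2"
    and "bilin (H_map G l z) = s + (Pm/Q)\<^sup>2 + (Pm1/Q)\<^sup>2"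
proof -
  have H: "H_map G l z = (\<chi> j. case j of Inl i \<Rightarrow> (if i = l then Pm / Q else g $ i) | Inr _ \<Rightarrow> Pm1 / Q)"
    unfolding H_map_def Let_def assms by simp
  have A: "(\<Sum>i\<in>UNIV. f (H_map G l z $ Inl i)) = f (Pm/Q) + (\<Sum>i\<in>UNIV-{l}. f (g $ i))" for f :: "complex \<Rightarrow> 'b::comm_monoid_add"
  proof -
    have "(\<Sum>i\<in>UNIV. f (H_map G l z $ Inl i)) = f (H_map G l z $ Inl l) + (\<Sum>i\<in>UNIV-{l}. f (H_map G l z $ Inl i))"
      by (rule sum_split_l)
    also have "(\<Sum>i\<in>UNIV-{l}. f (H_map G l z $ Inl i)) = (\<Sum>i\<in>UNIV-{l}. f (g $ i))"
      by (rule sum.cong) (auto simp: H)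
    finally show ?thesis by (simp add: H)
  qed
  have B: "H_map G l z $ Inr () = Pm1 / Q" by (simp add: H)
  show "hnorm2 (H_map G l z) = (\<Sum>i\<in>UNIV-{l}. (cmod (g$i))\<^sup>2) + (cmod (Pm/Q))\<^sup>2 + (cmod (Pm1/Q))\<^sup>2"
    unfolding hnorm2_def sum_plus_unit A[of "\<lambda>x. (cmod x)\<^sup>2"] B by simp
  show "bilin (H_map G l z) = s + (Pm/Q)\<^sup>2 + (Pm1/Q)\<^sup>2"
    unfolding bilin_def sum_plus_unit A[of "\<lambda>x. x\<^sup>2"] B s_def by simp
qed

lemma parallelogram_c: "(cmod (x + y))\<^sup>2 + (cmod (x - y))\<^sup>2 = 2 * (cmod x)\<^sup>2 + 2 * (cmod (y::complex))\<^sup>2"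
  unfolding cmod_power2 by (simp add: power2_eq_square algebra_simps)

lemma H_alg:
  fixes s g :: complex
  assumes g1: "g \<noteq> 1"
  defines "Pm \<equiv> s / 2 - g\<^sup>2 + g"
  defines "Pm1 \<equiv> \<i> * (s / 2 + g\<^sup>2 - g)"
  defines "Q \<equiv> complex_of_real (sqrt 2) * (1 - g)"
  shows "(Pm/Q)\<^sup>2 + (Pm1/Q)\<^sup>2 = s*g/(1-g)"
    and "(cmod (Pm/Q))\<^sup>2 + (cmod (Pm1/Q))\<^sup>2 = (cmod s)\<^sup>2/(4*(cmod (1-g))\<^sup>2) + (cmod g)\<^sup>2"
proof -
  have g1': "1 - g \<noteq> 0" using g1 by simp
  have sq2: "(complex_of_real (sqrt 2))\<^sup>2 = 2"
    by (metis of_real_numeral of_real_power real_sqrt_pow2 zero_le_numeral)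
  show "(Pm/Q)\<^sup>2 + (Pm1/Q)\<^sup>2 = s*g/(1-g)"
    unfolding Pm_def Pm1_def Q_def using g1' sq2
    by (simp add: power_divide power_mult_distrib field_simps) (simp add: power2_eq_square algebra_simps)
  have n1: "cmod (1-g) \<noteq> 0" using g1' by simp
  have cQ: "(cmod Q)\<^sup>2 = 2 * (cmod (1-g))\<^sup>2"
    unfolding Q_def by (simp add: norm_mult power_mult_distrib)
  have cP1: "cmod Pm1 = cmod (s/2 - (g - g\<^sup>2))" unfolding Pm1_def norm_mult by (simp add: algebra_simps)
  have cP: "Pm = s/2 + (g - g\<^sup>2)" unfolding Pm_def by simp
  have cB: "cmod (g - g\<^sup>2) = cmod g * cmod (1-g)"
    by (metis norm_mult power2_eq_square right_diff_distrib mult_1_right)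
  have "(cmod Pm)\<^sup>2 + (cmod Pm1)\<^sup>2 = 2 * (cmod (s/2))\<^sup>2 + 2 * (cmod g * cmod (1-g))\<^sup>2"
    unfolding cP cP1 parallelogram_c cB ..
  then have "(cmod Pm)\<^sup>2 + (cmod Pm1)\<^sup>2 = (cmod s)\<^sup>2/2 + 2 * (cmod g)\<^sup>2 * (cmod (1-g))\<^sup>2"
    by (simp add: power_divide power_mult_distrib)
  note E = this
  have "(cmod (Pm/Q))\<^sup>2 + (cmod (Pm1/Q))\<^sup>2 = ((cmod Pm)\<^sup>2 + (cmod Pm1)\<^sup>2) / (2*(cmod (1-g))\<^sup>2)"
    by (simp add: norm_divide power_divide cQ add_divide_distrib)
  also have "\<dots> = (cmod s)\<^sup>2/(4*(cmod (1-g))\<^sup>2) + (cmod g)\<^sup>2"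
    unfolding E using n1 by (simp add: field_simps power2_eq_square)
  finally show "(cmod (Pm/Q))\<^sup>2 + (cmod (Pm1/Q))\<^sup>2 = (cmod s)\<^sup>2/(4*(cmod (1-g))\<^sup>2) + (cmod g)\<^sup>2" .
qed

lemma hnorm2_norm: "hnorm2 (x::complex^'k) = (norm x)\<^sup>2"
  unfolding hnorm2_def norm_vec_def L2_set_def by (simp add: sum_nonneg)

lemma unit_ball_eq: "(unit_ball :: (complex^'k) set) = ball 0 1"
proof -
  have "\<And>x::complex^'k. (norm x)\<^sup>2 < 1 \<longleftrightarrow> norm x < 1"
    by (simp add: abs_square_less_1)
  moreover have "(unit_ball :: (complex^'k) set) = {x. (norm x)\<^sup>2 < 1}"
    unfolding unit_ball_def by (simp add: hnorm2_norm[unfolded hnorm2_def])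
  ultimately show ?thesis by (auto simp: dist_norm ball_def)
qed

definition FF :: "complex ^ 'k \<Rightarrow> real" where
  "FF Z = 1 - hnorm2 Z + (1/4) * (cmod (bilin Z))\<^sup>2"

lemma cont_FF: "continuous_on S FF"
  unfolding FF_def hnorm2_norm bilin_def
  by (intro continuous_intros linear_continuous_on bounded_linear_vec_nth)

lemma proper_lemma:
  fixes G :: "complex ^ 'n \<Rightarrow> complex ^ 'm" and \<Phi> :: "complex ^ 'n \<Rightarrow> complex ^ 'k"
  assumes pG: "proper_map G unit_ball unit_ball" and cP: "continuous_on unit_ball \<Phi>"
    and im: "\<Phi> ` unit_ball \<subseteq> DIV"
    and id: "\<And>z. z \<in> unit_ball \<Longrightarrow> FF (\<Phi> z) = 1 - hnorm2 (G z)"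
  shows "proper_map \<Phi> unit_ball DIV"
  unfolding proper_map_def
proof (intro conjI im allI impI)
  fix K :: "(complex^'k) set" assume K: "K \<subseteq> DIV \<and> compact K"
  show "compact (unit_ball \<inter> \<Phi> -` K)"
  proof (cases "K = {}")
    case True then show ?thesis by simp
  next
    case False
    obtain k where k: "k \<in> K" "\<And>x. x \<in> K \<Longrightarrow> FF k \<le> FF x"
      using continuous_attains_inf[OF _ False cont_FF] K by blast
    define e where "e = FF k"
    have e0: "e > 0" using k K unfolding e_def FF_def DIV_def by auto
    define C where "C = {w::complex^'m. (norm w)\<^sup>2 \<le> 1 - e}"
    have Cb: "C \<subseteq> unit_ball"
      unfolding unit_ball_eq
    proof
      fix x assume "x \<in> C"
      then have "(norm x)\<^sup>2 < 1" using e0 unfolding C_def by auto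
      then show "x \<in> ball 0 1" by (simp add: abs_square_less_1)
    qed
    have "closed C" unfolding C_def by (intro closed_Collect_le continuous_intros)
    moreover have "bounded C" using Cb unfolding unit_ball_eq by (meson bounded_ball bounded_subset)
    ultimately have "compact C" by (simp add: compact_eq_bounded_closed)
    then have A: "compact (unit_ball \<inter> G -` C)" using pG Cb unfolding proper_map_def by blast
    have sub: "unit_ball \<inter> \<Phi> -` K = (unit_ball \<inter> G -` C) \<inter> \<Phi> -` K"
    proof -
      have "G z \<in> C" if z: "z \<in> unit_ball" "\<Phi> z \<in> K" for z
      proof -
        have "e \<le> FF (\<Phi> z)" using k z unfolding e_def by blast
        then show "G z \<in> C" using id[OF z(1)] unfolding C_def hnorm2_norm by simp
      qed
      then show ?thesis by blast
    qed
    have "closed ((unit_ball \<inter> G -` C) \<inter> \<Phi> -` K)"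
      by (rule continuous_closed_preimage)
        (use A K compact_imp_closed continuous_on_subset[OF cP] in auto)
    from closed_Int_compact[OF this A] show ?thesis unfolding sub
      by (metis inf.cobounded1 inf.absorb1)
  qed
qed

lemma holo_from_components:
  assumes "\<And>z j. z \<in> S \<Longrightarrow> hol (\<lambda>x. \<Phi> x $ j) z"
  shows "holo_on \<Phi> S"
  unfolding holo_on_def
proof
  fix z assume z: "z \<in> S"
  have "\<forall>j. \<exists>L. ((\<lambda>x. \<Phi> x $ j) has_derivative L) (at z) \<and> (\<forall>c w. L (c *s w) = c * L w)"
    using assms[OF z] unfolding hol_def by blast
  then obtain L where L: "\<And>j. ((\<lambda>x. \<Phi> x $ j) has_derivative L j) (at z)"
      "\<And>j c w. L j (c *s w) = c * L j w" by metis
  show "\<exists>L. (\<Phi> has_derivative L) (at z) \<and> (\<forall>(c::complex) w. L (c *s w) = c *s L w)"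
    by (rule exI[of _ "\<lambda>h. \<chi> j. L j h"]) (auto intro!: has_derivative_vec_lambda' L simp: vec_eq_iff L(2))
qed

lemma holo_cont: "holo_on \<Phi> S \<Longrightarrow> continuous_on S \<Phi>"
  unfolding holo_on_def by (meson continuous_at_imp_continuous_on has_derivative_continuous)



lemma H_id:
  fixes G :: "complex ^ 'n \<Rightarrow> complex ^ 'm" and z and l
  assumes g1: "G z $ l \<noteq> 1"
  shows "FF (H_map G l z) = 1 - hnorm2 (G z)"
    and "bilin (H_map G l z) = (\<Sum>i\<in>UNIV - {l}. (G z $ i)\<^sup>2) / (1 - G z $ l)"
proof -
  define g where "g = G z $ l"
  define s where "s = (\<Sum>i\<in>UNIV - {l}. (G z $ i)\<^sup>2)"
  define a where "a = (\<Sum>i\<in>UNIV - {l}. (cmod (G z $ i))\<^sup>2)"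
  have g1': "1 - g \<noteq> 0" using g1 unfolding g_def by simp
  note P = H_parts[where G=G and z=z and l=l, folded g_def s_def a_def]
  note A = H_alg[OF g1[folded g_def], of s]
  have hb: "bilin (H_map G l z) = s / (1 - g)"
    unfolding P(2) add.assoc A(1) using g1' by (simp add: field_simps)
  then show "bilin (H_map G l z) = (\<Sum>i\<in>UNIV - {l}. (G z $ i)\<^sup>2) / (1 - G z $ l)"
    unfolding s_def g_def .
  have hn: "hnorm2 (H_map G l z) = a + (cmod s)\<^sup>2/(4*(cmod (1-g))\<^sup>2) + (cmod g)\<^sup>2"
    unfolding P(1) using A(2) by simp
  have hg: "hnorm2 (G z) = (cmod g)\<^sup>2 + a"
    unfolding hnorm2_def a_def g_def by (rule sum_split_l)
  show "FF (H_map G l z) = 1 - hnorm2 (G z)"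
    unfolding FF_def hn hb hg by (simp add: norm_divide power_divide)
qed

lemma W_id:
  fixes G :: "complex ^ 'n \<Rightarrow> complex ^ 'm" and z
  shows "FF (W_map G z) = 1 - hnorm2 (G z)"
    and "bilin (W_map G z) = 2 * (1 - csqrt (1 - (\<Sum>i\<in>UNIV. (G z $ i)\<^sup>2)))"
proof -
  define t where "t = (\<Sum>i\<in>UNIV. (G z $ i)\<^sup>2)"
  define w where "w = 1 - csqrt (1 - t)"
  have W: "W_map G z = (\<chi> j. case j of Inl i \<Rightarrow> G z $ i | Inr _ \<Rightarrow> w)"
    unfolding W_map_def w_def t_def by simp
  have "bilin (W_map G z) = t + w\<^sup>2"
    unfolding bilin_def sum_plus_unit W t_def by simp
  also have "\<dots> = 2 * w"
  proof -
    have "(csqrt (1 - t))\<^sup>2 = 1 - t" by simp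
    then show ?thesis unfolding w_def by (simp add: power2_eq_square algebra_simps)
  qed
  finally have b: "bilin (W_map G z) = 2 * w" .
  then show "bilin (W_map G z) = 2 * (1 - csqrt (1 - (\<Sum>i\<in>UNIV. (G z $ i)\<^sup>2)))"
    unfolding w_def t_def .
  have "hnorm2 (W_map G z) = hnorm2 (G z) + (cmod w)\<^sup>2"
    unfolding hnorm2_def sum_plus_unit W by simp
  then show "FF (W_map G z) = 1 - hnorm2 (G z)"
    unfolding FF_def b by (simp add: norm_mult power_mult_distrib)
qed

lemma cmod_comp_lt:
  assumes "hnorm2 (g::complex^'m) < 1"
  shows "cmod (g $ l) < 1"
proof -
  have "(cmod (g $ l))\<^sup>2 \<le> hnorm2 g" unfolding hnorm2_def
    by (rule member_le_sum) auto
  then have "(cmod (g $ l))\<^sup>2 < 1" using assms by linarith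
  then show ?thesis by (simp add: abs_square_less_1)
qed

lemma H_bound:
  fixes G :: "complex ^ 'n \<Rightarrow> complex ^ 'm" and z and l
  assumes "hnorm2 (G z) < 1"
  shows "cmod (bilin (H_map G l z)) < 2"
proof -
  define g where "g = G z $ l"
  define s where "s = (\<Sum>i\<in>UNIV - {l}. (G z $ i)\<^sup>2)"
  define a where "a = (\<Sum>i\<in>UNIV - {l}. (cmod (G z $ i))\<^sup>2)"
  have g1: "cmod g < 1" unfolding g_def by (rule cmod_comp_lt[OF assms])
  then have g1': "g \<noteq> 1" by auto
  have hg: "hnorm2 (G z) = (cmod g)\<^sup>2 + a"
    unfolding hnorm2_def a_def g_def by (rule sum_split_l)
  have sa: "cmod s \<le> a" unfolding s_def a_def
    by (rule order_trans[OF norm_sum]) (simp add: norm_power)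
  have t: "1 - cmod g \<le> cmod (1 - g)"
    by (metis norm_one norm_triangle_ineq2)
  have "cmod s < (1 - cmod g) * (1 + cmod g)" using sa hg assms by (simp add: algebra_simps power2_eq_square)
  also have "\<dots> \<le> cmod (1 - g) * 2"
    by (rule mult_mono) (use t g1 in auto)
  finally have "cmod s < 2 * cmod (1 - g)" by simp
  moreover have "cmod (1 - g) > 0" using g1' by simp
  ultimately have "cmod (s / (1 - g)) < 2" by (simp add: norm_divide divide_less_eq)
  then show ?thesis using H_id(2)[where G=G and z=z and l=l] g1' unfolding s_def g_def by simp
qed

lemma W_bound:
  fixes G :: "complex ^ 'n \<Rightarrow> complex ^ 'm" and z
  assumes "hnorm2 (G z) < 1"
  shows "cmod (bilin (W_map G z)) < 2"
proof -
  define t where "t = (\<Sum>i\<in>UNIV. (G z $ i)\<^sup>2)"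
  define u where "u = csqrt (1 - t)"
  have tl: "cmod t < 1" unfolding t_def using assms unfolding hnorm2_def
    by (rule le_less_trans[OF order_trans[OF norm_sum], rotated]) (simp add: norm_power)
  have "(1 - u) * (1 + u) = t" unfolding u_def by (simp add: algebra_simps power2_eq_square[symmetric])
  then have e: "cmod (1 - u) * cmod (1 + u) = cmod t" by (metis norm_mult)
  have "1 \<le> Re (1 + u)" using Re_csqrt[of "1 - t"] unfolding u_def by simp
  then have c1: "1 \<le> cmod (1 + u)" using complex_Re_le_cmod[of "1+u"] by linarith
  have "cmod (1 - u) \<le> cmod t" using e mult_left_mono[OF c1 norm_ge_zero[of "1-u"]] by simp
  then have "cmod (1 - u) < 1" using tl by linarith
  then have "cmod (2*(1-u)) < 2" by (simp only: norm_mult) simp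
  moreover have "bilin (W_map G z) = 2*(1-u)" using W_id(2)[of G z] unfolding t_def u_def .
  ultimately show ?thesis by simp
qed

lemma in_DIV:
  assumes "FF Z = 1 - hnorm2 g" "hnorm2 g < 1" "cmod (bilin Z) < 2"
  shows "Z \<in> DIV"
proof -
  have "(cmod (bilin Z))\<^sup>2 < 2\<^sup>2" using assms(3) by (intro power_strict_mono) auto
  then show ?thesis using assms unfolding DIV_def FF_def hnorm2_def by auto
qed

theorem mainTheorem17:
  fixes G :: "complex ^ 'n \<Rightarrow> complex ^ 'm" and l :: 'm
  assumes "CARD('m) \<ge> CARD('n)"
    and "holo_proper G unit_ball unit_ball"
    and "G 0 = 0"
  shows "(\<forall>z\<in>unit_ball. 1 - hnorm2 (H_map G l z) + (1/4) * (cmod (bilin (H_map G l z)))\<^sup>2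
                          = 1 - (\<Sum>i\<in>UNIV. (cmod (G z $ i))\<^sup>2))
       \<and> (\<forall>z\<in>unit_ball. 1 - hnorm2 (W_map G z) + (1/4) * (cmod (bilin (W_map G z)))\<^sup>2
                          = 1 - (\<Sum>i\<in>UNIV. (cmod (G z $ i))\<^sup>2))
       \<and> holo_proper (H_map G l) unit_ball DIV
       \<and> holo_proper (W_map G) unit_ball DIV"
proof -
  have hG: "holo_on G unit_ball" and pG: "proper_map G unit_ball unit_ball"
    using assms(2) unfolding holo_proper_def by auto
  have Gb: "hnorm2 (G z) < 1" if "z \<in> unit_ball" for z
    using pG that unfolding proper_map_def unit_ball_def hnorm2_def by auto
  have g1: "G z $ l \<noteq> 1" if "z \<in> unit_ball" for z
    using cmod_comp_lt[OF Gb[OF that], of l] by auto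
  have idH: "FF (H_map G l z) = 1 - hnorm2 (G z)" if "z \<in> unit_ball" for z
    using H_id(1)[where G=G and z=z and l=l, OF g1[OF that]] .
  have idW: "FF (W_map G z) = 1 - hnorm2 (G z)" for z
    using W_id(1) .
  have imH: "H_map G l ` unit_ball \<subseteq> DIV"
    using idH Gb H_bound in_DIV by blast
  have imW: "W_map G ` unit_ball \<subseteq> DIV"
    using idW Gb W_bound in_DIV by blast
  have holH: "holo_on (H_map G l) unit_ball"
  proof (rule holo_from_components)
    fix z :: "complex^'n" and j assume z: "z \<in> unit_ball"
    have c: "\<And>i. hol (\<lambda>x. G x $ i) z" using hol_component[OF hG z] .
    have Q: "complex_of_real (sqrt 2) * (1 - G z $ l) \<noteq> 0" using g1[OF z] by simp
    show "hol (\<lambda>x. H_map G l x $ j) z"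
    proof (cases j)
      case (Inl i)
      show ?thesis
      proof (cases "i = l")
        case True
        then show ?thesis unfolding Inl H_map_def Let_def
          by (simp, intro hol_divide hol_add hol_diff hol_mult hol_power2 hol_sum hol_const c Q; simp)
      next
        case False
        then show ?thesis unfolding Inl H_map_def Let_def by (simp add: c)
      qed
    next
      case (Inr u)
      then show ?thesis unfolding H_map_def Let_def
        by (simp, intro hol_divide hol_add hol_diff hol_mult hol_power2 hol_sum hol_const c Q; simp)
    qed
  qed
  have holW: "holo_on (W_map G) unit_ball"
  proof (rule holo_from_components)
    fix z :: "complex^'n" and j assume z: "z \<in> unit_ball"
    have c: "\<And>i. hol (\<lambda>x. G x $ i) z" using hol_component[OF hG z] .
    show "hol (\<lambda>x. W_map G x $ j) z"
    proof (cases j)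
      case (Inl i)
      then show ?thesis unfolding W_map_def by (simp add: c)
    next
      case (Inr u)
      define t where "t = (\<Sum>i\<in>UNIV. (G z $ i)\<^sup>2)"
      have tl: "cmod t < 1" unfolding t_def using Gb[OF z] unfolding hnorm2_def
        by (rule le_less_trans[OF order_trans[OF norm_sum], rotated]) (simp add: norm_power)
      have "Re t < 1" using complex_Re_le_cmod[of t] tl by linarith
      then have nr: "1 - t \<notin> \<real>\<^sub>\<le>\<^sub>0" by (simp add: complex_nonpos_Reals_iff)
      have h1: "hol (\<lambda>x. 1 - (\<Sum>i\<in>UNIV. (G x $ i)\<^sup>2)) z"
        by (intro hol_diff hol_const hol_sum hol_power2 c)
      have "hol (\<lambda>x. 1 - csqrt (1 - (\<Sum>i\<in>UNIV. (G x $ i)\<^sup>2))) z"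
        by (intro hol_diff hol_const hol_compose[OF h1 has_field_derivative_csqrt])
          (use nr[unfolded t_def] in simp)
      then show ?thesis using Inr unfolding W_map_def by simp
    qed
  qed
  have prH: "proper_map (H_map G l) unit_ball DIV"
    by (rule proper_lemma[OF pG holo_cont[OF holH] imH idH])
  have prW: "proper_map (W_map G) unit_ball DIV"
    by (rule proper_lemma[OF pG holo_cont[OF holW] imW idW])
  show ?thesis
    using idH idW holH holW prH prW unfolding FF_def holo_proper_def hnorm2_def by auto
qed

end
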